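(* Let $G$ be an odd unicyclic graph on $n$ vertices $1,\ldots,n$ and edges $e_1,\ldots,e_n$ with cycle $C$. For an edge $e_k$ and distinct vertices $i,j$: $e_k\notin C$ and $i,j\notin G\setminus e_k[C]$ if and only if $e_k$ is an edge of both $P_{i-i^*}$ and $P_{j-j^*}$. Moreover, for vertices $i,j$ and an edge $e_k$: (a) if $e_k\in C$ and $e_k\in P_{i-j}$, then $d(e_k,i)+d(e_k,j)$ and $d(i,j)$ have different parity; (b) if $e_k\in C$ and $e_k\notin P_{i-j}$, then $d(e_k,i)+d(e_k,j)$ and $d(i,j)$ have the same parity; (c) if $e_k\in P_{i-i^*}\cap P_{j-j^*}$, then $d(e_k,i)+d(e_k,j)$ and $d(i,j)$ have the same parity.
   Context: A unicyclic graph on $n$ vertices is a simple connected graph with $n$ edges; it is odd if its unique cycle $C$ has odd length. $d$ is graph distance; for vertex $j$ and edge $e=\{l,m\}$, $d(e,j):=\min\{d(j,l),d(j,m)\}$. $P_{i-j}$ denotes the shortest path between $i$ and $j$. For a vertex $i$, $i^*$ is the vertex of $C$ closest to $i$ ($i^*=i$ if $i\in C$), and $P_{i-i^*}$ is the unique shortest path from $i$ to $C$. For an edge $e$ not on $C$, $G\setminus e[C]$ is the component of $G\setminus e$ containing $C$; for $e$ on $C$, $G\setminus e[C]:=G\setminus e$. *)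

theory Defs
  imports Main
begin

definition simple_graph :: "'a set \<Rightarrow> 'a set set \<Rightarrow> bool" where
  "simple_graph V E \<longleftrightarrow> finite V \<and> (\<forall>e\<in>E. e \<subseteq> V \<and> card e = 2)"

definition walk :: "'a set \<Rightarrow> 'a set set \<Rightarrow> 'a list \<Rightarrow> bool" where
  "walk V E xs \<longleftrightarrow> xs \<noteq> [] \<and> set xs \<subseteq> V \<and>
     (\<forall>k. Suc k < length xs \<longrightarrow> {xs ! k, xs ! Suc k} \<in> E)"

definition walk_edges :: "'a list \<Rightarrow> 'a set set" where
  "walk_edges xs = (\<lambda>(a, b). {a, b}) ` set (zip xs (tl xs))"

definition connected_graph :: "'a set \<Rightarrow> 'a set set \<Rightarrow> bool" where
  "connected_graph V E \<longleftrightarrow>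
     (\<forall>u\<in>V. \<forall>v\<in>V. \<exists>xs. walk V E xs \<and> hd xs = u \<and> last xs = v)"

definition unicyclic :: "'a set \<Rightarrow> 'a set set \<Rightarrow> bool" where
  "unicyclic V E \<longleftrightarrow> simple_graph V E \<and> connected_graph V E \<and> card E = card V"

definition gdist :: "'a set \<Rightarrow> 'a set set \<Rightarrow> 'a \<Rightarrow> 'a \<Rightarrow> nat" where
  "gdist V E u v = (LEAST k. \<exists>xs. walk V E xs \<and> hd xs = u \<and> last xs = v \<and> length xs = Suc k)"

definition edist :: "'a set \<Rightarrow> 'a set set \<Rightarrow> 'a set \<Rightarrow> 'a \<Rightarrow> nat" where
  "edist V E e j = Min ((\<lambda>l. gdist V E j l) ` e)"

definition shortest_path :: "'a set \<Rightarrow> 'a set set \<Rightarrow> 'a list \<Rightarrow> 'a \<Rightarrow> 'a \<Rightarrow> bool" where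
  "shortest_path V E xs u v \<longleftrightarrow> walk V E xs \<and> hd xs = u \<and> last xs = v \<and>
     length xs = Suc (gdist V E u v)"

definition is_cycle :: "'a set \<Rightarrow> 'a set set \<Rightarrow> 'a list \<Rightarrow> bool" where
  "is_cycle V E cyc \<longleftrightarrow> length cyc \<ge> 3 \<and> distinct cyc \<and> walk V E cyc \<and> {last cyc, hd cyc} \<in> E"

definition cycle_edges :: "'a list \<Rightarrow> 'a set set" where
  "cycle_edges cyc = insert {last cyc, hd cyc} (walk_edges cyc)"

(* P_{i-i*}: a shortest path from i to the vertex i* of the cycle closest to i *)
definition path_to_cycle :: "'a set \<Rightarrow> 'a set set \<Rightarrow> 'a list \<Rightarrow> 'a \<Rightarrow> 'a list \<Rightarrow> bool" where
  "path_to_cycle V E cyc i p \<longleftrightarrow>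
     (\<exists>c\<in>set cyc. shortest_path V E p i c \<and> (\<forall>c'\<in>set cyc. gdist V E i c \<le> gdist V E i c'))"

(* vertex set of G \ e [C]: component of G - e containing the cycle C (all of V if e is on C) *)
definition comp_C :: "'a set \<Rightarrow> 'a set set \<Rightarrow> 'a list \<Rightarrow> 'a set \<Rightarrow> 'a set" where
  "comp_C V E cyc e = (if e \<in> cycle_edges cyc then V
     else {v \<in> V. \<exists>xs. walk V (E - {e}) xs \<and> hd xs \<in> set cyc \<and> last xs = v})"

end

theory Submission
  imports Defs
begin


declare upt_Suc[simp del]

lemma walk_map: "walk V E (map f [0..<n]) \<longleftrightarrow> 0 < n \<and> (\<forall>s<n. f s \<in> V) \<and> (\<forall>s. Suc s < n \<longrightarrow> {f s, f (Suc s)} \<in> E)"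
  unfolding walk_def by (auto simp: image_subset_iff)

lemma walk_nthV: "walk V E xs \<Longrightarrow> k < length xs \<Longrightarrow> xs ! k \<in> V"
  unfolding walk_def by auto

lemma walk_nthE: "walk V E xs \<Longrightarrow> Suc k < length xs \<Longrightarrow> {xs ! k, xs ! Suc k} \<in> E"
  unfolding walk_def by auto

lemma walk_len: "walk V E xs \<Longrightarrow> 0 < length xs"
  unfolding walk_def by auto

lemma hd_map_upt: "0 < n \<Longrightarrow> hd (map f [0..<n]) = f 0"
  by (simp add: hd_map upt_conv_Cons)

lemma last_map_upt: "0 < n \<Longrightarrow> last (map f [0..<n]) = f (n - 1)"
  by (simp add: last_map)

lemma hd_map_upt_Suc[simp]: "hd (map f [0..<Suc n]) = f 0"
  by (simp only: upt_conv_Cons[OF zero_less_Suc] list.map list.sel)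

lemma last_map_upt_Suc[simp]: "last (map f [0..<Suc n]) = f n"
  by (simp add: upt_Suc)

lemma hd_nth0: "xs \<noteq> [] \<Longrightarrow> hd xs = xs ! 0" by (simp add: hd_conv_nth)

lemma walk_edges_nth: "walk_edges xs = {{xs ! k, xs ! Suc k} | k. Suc k < length xs}"
proof -
  have "set (zip xs (tl xs)) = {(xs ! k, xs ! Suc k) | k. Suc k < length xs}"
    by (auto simp: set_zip nth_tl)
  then show ?thesis unfolding walk_edges_def by auto
qed

lemma walk_sub:
  assumes "walk V E xs" "a \<le> b" "b < length xs"
  shows "walk V E (map (\<lambda>s. xs ! (a + s)) [0..<Suc (b - a)])"
  unfolding walk_map
proof (intro conjI allI impI)
  fix s assume "s < Suc (b - a)" then show "xs ! (a + s) \<in> V" using assms by (intro walk_nthV[OF assms(1)]) auto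
next
  fix s assume "Suc s < Suc (b - a)"
  then have "Suc (a + s) < length xs" using assms by auto
  then show "{xs ! (a + s), xs ! (a + Suc s)} \<in> E" using walk_nthE[OF assms(1)] by simp
qed simp

lemma walk_sub_rev:
  assumes "walk V E xs" "a \<le> b" "b < length xs"
  shows "walk V E (map (\<lambda>s. xs ! (b - s)) [0..<Suc (b - a)])"
  unfolding walk_map
proof (intro conjI allI impI)
  fix s assume "s < Suc (b - a)" then show "xs ! (b - s) \<in> V" using assms by (intro walk_nthV[OF assms(1)]) auto
next
  fix s assume s: "Suc s < Suc (b - a)"
  then have "Suc (b - Suc s) < length xs" "b - s = Suc (b - Suc s)" using assms by auto
  then have "{xs ! (b - Suc s), xs ! (b - s)} \<in> E" using walk_nthE[OF assms(1)] by metis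
  then show "{xs ! (b - s), xs ! (b - Suc s)} \<in> E" by (simp add: insert_commute)
qed simp

definition conn :: "'a set \<Rightarrow> 'a set set \<Rightarrow> 'a \<Rightarrow> 'a \<Rightarrow> bool" where
  "conn V E u v \<longleftrightarrow> (\<exists>xs. walk V E xs \<and> hd xs = u \<and> last xs = v)"

lemma conn_walk_sub:
  assumes "walk V E xs" "a \<le> b" "b < length xs"
  shows "conn V E (xs ! a) (xs ! b) \<and> conn V E (xs ! b) (xs ! a)"
proof -
  have 1: "hd (map (\<lambda>s. xs ! (a + s)) [0..<Suc (b - a)]) = xs ! a"
       "last (map (\<lambda>s. xs ! (a + s)) [0..<Suc (b - a)]) = xs ! b"
       "hd (map (\<lambda>s. xs ! (b - s)) [0..<Suc (b - a)]) = xs ! b"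
       "last (map (\<lambda>s. xs ! (b - s)) [0..<Suc (b - a)]) = xs ! a"
    using assms(2) by (simp_all add: hd_map_upt last_map_upt)
  show ?thesis unfolding conn_def using walk_sub[OF assms] walk_sub_rev[OF assms] 1 by blast
qed

lemma walk_hd_last: "walk V E xs \<Longrightarrow> hd xs = xs ! 0 \<and> last xs = xs ! (length xs - 1)"
  by (simp add: walk_def hd_conv_nth last_conv_nth)

lemma conn_sym: assumes "conn V E u v" shows "conn V E v u"
proof -
  obtain xs where xs: "walk V E xs" "hd xs = u" "last xs = v" using assms conn_def by metis
  have "0 < length xs" using walk_len xs by blast
  then show ?thesis using conn_walk_sub[OF xs(1), of 0 "length xs - 1"] walk_hd_last[OF xs(1)] xs by auto
qed

lemma conn_idx:
  assumes "\<forall>s. a \<le> s \<longrightarrow> Suc s \<le> b \<longrightarrow> {xs ! s, xs ! Suc s} \<in> E"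
    and "\<forall>s\<le>b. xs ! s \<in> V" and "a \<le> b"
  shows "conn V E (xs ! a) (xs ! b)"
proof -
  have "walk V E (map (\<lambda>s. xs ! (a + s)) [0..<Suc (b - a)])"
    unfolding walk_map using assms by auto
  moreover have "hd (map (\<lambda>s. xs ! (a + s)) [0..<Suc (b - a)]) = xs ! a"
       "last (map (\<lambda>s. xs ! (a + s)) [0..<Suc (b - a)]) = xs ! b"
    using assms(3) by (simp_all add: hd_map_upt last_map_upt)
  ultimately show ?thesis unfolding conn_def by blast
qed

lemma walk_concat:
  assumes "walk V E xs" "walk V E ys" "last xs = hd ys"
  shows "walk V E (map (\<lambda>s. if s < length xs then xs ! s else ys ! (s + 1 - length xs)) [0..<length xs + length ys - 1])"
    (is "walk V E (map ?f [0..<?N])")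
  unfolding walk_map
proof (intro conjI allI impI)
  have "0 < length xs" "0 < length ys" using walk_len assms by blast+
  then show "0 < ?N" by linarith
next
  fix s assume "s < ?N" then show "?f s \<in> V" using assms walk_nthV by (auto)
next
  fix s assume s: "Suc s < ?N"
  have hl: "ys ! 0 = xs ! (length xs - 1)" using assms walk_hd_last by metis
  show "{?f s, ?f (Suc s)} \<in> E"
  proof (cases "Suc s < length xs")
    case True then show ?thesis using assms walk_nthE by auto
  next
    case False
    show ?thesis
    proof (cases "s < length xs")
      case True
      then have "s = length xs - 1" using False by auto
      then show ?thesis using s hl walk_nthE[OF assms(2), of 0] False True walk_len[OF assms(1)] by auto
    next
      case F2: False
      then have "s + 1 - length xs = Suc (s - length xs)" "Suc s + 1 - length xs = Suc (Suc (s - length xs))" by auto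
      then show ?thesis using s F2 walk_nthE[OF assms(2), of "Suc (s - length xs)"] by auto
    qed
  qed
qed

lemma walk_concat_hd_last:
  assumes "walk V E xs" "walk V E ys" "last xs = hd ys"
  shows "hd (map (\<lambda>s. if s < length xs then xs ! s else ys ! (s + 1 - length xs)) [0..<length xs + length ys - 1]) = hd xs
   \<and> last (map (\<lambda>s. if s < length xs then xs ! s else ys ! (s + 1 - length xs)) [0..<length xs + length ys - 1]) = last ys"
proof -
  obtain n where n: "length xs = Suc n" using walk_len assms(1) by (metis gr0_implies_Suc)
  obtain m where m: "length ys = Suc m" using walk_len assms(2) by (metis gr0_implies_Suc)
  have e: "length xs + length ys - 1 = Suc (n + m)" using n m by simp
  have h: "hd ys = ys ! 0" "last ys = ys ! m" "hd xs = xs ! 0" "last xs = xs ! n"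
    using assms walk_hd_last n m by (metis diff_Suc_1)+
  show ?thesis
  proof (cases m)
    case 0 then show ?thesis unfolding e using n h assms(3) by simp
  next
    case (Suc k)
    then have "\<not> n + m < length xs" "n + m + 1 - length xs = m" using n by auto
    then show ?thesis unfolding e using n h by simp
  qed
qed

lemma conn_trans: assumes "conn V E u v" "conn V E v w" shows "conn V E u w"
proof -
  obtain xs where xs: "walk V E xs" "hd xs = u" "last xs = v" using assms(1) conn_def by metis
  obtain ys where ys: "walk V E ys" "hd ys = v" "last ys = w" using assms(2) conn_def by metis
  have l: "last xs = hd ys" using xs ys by simp
  show ?thesis unfolding conn_def using walk_concat[OF xs(1) ys(1) l] walk_concat_hd_last[OF xs(1) ys(1) l] xs ys
    by blast
qed

lemma walk1: "walk V E [u]" if "u \<in> V"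
  unfolding walk_def using that by simp

lemma conn_refl: "conn V E u u" if "u \<in> V"
  unfolding conn_def using walk1[OF that] by (intro exI[of _ "[u]"]) simp

lemma walk2: "walk V E [u, v]" if "{u, v} \<in> E" "u \<in> V" "v \<in> V"
  unfolding walk_def
proof (intro conjI allI impI)
  fix k assume "Suc k < length [u, v]"
  then have "k = 0" by simp
  then show "{[u, v] ! k, [u, v] ! Suc k} \<in> E" using that(1) by simp
qed (use that in auto)

lemma conn_edge: "conn V E u v" if "{u, v} \<in> E" "u \<in> V" "v \<in> V"
  unfolding conn_def using walk2[OF that] by (intro exI[of _ "[u,v]"]) simp

lemma conn_V: "u \<in> V \<and> v \<in> V" if c: "conn V E u v"
proof -
  obtain xs where xs: "walk V E xs" "hd xs = u" "last xs = v" using c unfolding conn_def by blast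
  have "0 < length xs" using walk_len xs by blast
  then have "xs ! 0 \<in> V" "xs ! (length xs - 1) \<in> V" using walk_nthV[OF xs(1)] by simp_all
  then show ?thesis using walk_hd_last[OF xs(1)] xs by simp
qed

lemma walk_induct_idx:
  assumes "walk V E xs" "P (xs ! 0)"
    "\<And>x y. {x, y} \<in> E \<Longrightarrow> x \<in> V \<Longrightarrow> y \<in> V \<Longrightarrow> P x \<Longrightarrow> P y"
  shows "k < length xs \<Longrightarrow> P (xs ! k)"
proof (induction k)
  case 0 then show ?case using assms by simp
next
  case (Suc k)
  then have "P (xs ! k)" by simp
  moreover have "{xs ! k, xs ! Suc k} \<in> E" "xs ! k \<in> V" "xs ! Suc k \<in> V"
    using Suc.prems walk_nthE[OF assms(1)] walk_nthV[OF assms(1)] by auto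
  ultimately show ?case using assms(3) by blast
qed

lemma walk_induct_last:
  assumes "walk V E xs" "P (hd xs)"
    "\<And>x y. {x, y} \<in> E \<Longrightarrow> x \<in> V \<Longrightarrow> y \<in> V \<Longrightarrow> P x \<Longrightarrow> P y"
  shows "P (last xs)"
proof -
  have "0 < length xs" using walk_len assms by blast
  then have "P (xs ! (length xs - 1))" using walk_induct_idx[of V E xs P "length xs - 1"] assms walk_hd_last[OF assms(1)] by simp
  then show ?thesis using walk_hd_last[OF assms(1)] by simp
qed



lemma gdist_le: assumes "walk V E xs" shows "gdist V E (hd xs) (last xs) \<le> length xs - 1"
proof -
  have "length xs = Suc (length xs - 1)" using walk_len[OF assms] by simp
  then show ?thesis unfolding gdist_def using assms by (intro Least_le) blast
qed

lemma gdist_idx: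
  assumes "walk V E xs" "a \<le> b" "b < length xs"
  shows "gdist V E (xs ! a) (xs ! b) \<le> b - a \<and> gdist V E (xs ! b) (xs ! a) \<le> b - a"
proof -
  have 1: "hd (map (\<lambda>s. xs ! (a + s)) [0..<Suc (b - a)]) = xs ! a"
       "last (map (\<lambda>s. xs ! (a + s)) [0..<Suc (b - a)]) = xs ! b"
       "hd (map (\<lambda>s. xs ! (b - s)) [0..<Suc (b - a)]) = xs ! b"
       "last (map (\<lambda>s. xs ! (b - s)) [0..<Suc (b - a)]) = xs ! a"
    using assms(2) by simp_all
  show ?thesis using gdist_le[OF walk_sub[OF assms]] gdist_le[OF walk_sub_rev[OF assms]] 1 by simp
qed

lemma conn_gdist:
  assumes "conn V E u v"
  shows "\<exists>xs. walk V E xs \<and> hd xs = u \<and> last xs = v \<and> length xs = Suc (gdist V E u v)"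
proof -
  obtain xs where xs: "walk V E xs" "hd xs = u" "last xs = v" using assms unfolding conn_def by blast
  have "length xs = Suc (length xs - 1)" using walk_len[OF xs(1)] by simp
  then have "\<exists>k. \<exists>xs. walk V E xs \<and> hd xs = u \<and> last xs = v \<and> length xs = Suc k" using xs by blast
  then show ?thesis unfolding gdist_def by (rule LeastI_ex)
qed

lemma connected_conn: "connected_graph V E \<Longrightarrow> u \<in> V \<Longrightarrow> v \<in> V \<Longrightarrow> conn V E u v"
  unfolding connected_graph_def conn_def by blast

lemma gdist_tri:
  assumes "conn V E u v" "conn V E v w"
  shows "gdist V E u w \<le> gdist V E u v + gdist V E v w"
proof -
  obtain xs where xs: "walk V E xs" "hd xs = u" "last xs = v" "length xs = Suc (gdist V E u v)"
    using conn_gdist[OF assms(1)] by blast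
  obtain ys where ys: "walk V E ys" "hd ys = v" "last ys = w" "length ys = Suc (gdist V E v w)"
    using conn_gdist[OF assms(2)] by blast
  have l: "last xs = hd ys" using xs ys by simp
  have "gdist V E u w \<le> length xs + length ys - 1 - 1"
    using gdist_le[OF walk_concat[OF xs(1) ys(1) l]] walk_concat_hd_last[OF xs(1) ys(1) l] xs ys by simp
  then show ?thesis using xs ys by simp
qed

lemma gdist_sym_le:
  assumes "conn V E u v" shows "gdist V E v u \<le> gdist V E u v"
proof -
  obtain xs where xs: "walk V E xs" "hd xs = u" "last xs = v" "length xs = Suc (gdist V E u v)"
    using conn_gdist[OF assms(1)] by blast
  show ?thesis using gdist_idx[OF xs(1), of 0 "length xs - 1"] xs walk_hd_last[OF xs(1)] by simp
qed

lemma gdist_sym: "conn V E u v \<Longrightarrow> gdist V E v u = gdist V E u v"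
  using gdist_sym_le conn_sym by (metis le_antisym)

lemma gdist_refl: assumes "u \<in> V" shows "gdist V E u u = 0"
  using gdist_le[OF walk1[OF assms, of E]] by simp

lemma gdist_0: assumes "conn V E u v" "gdist V E u v = 0" shows "u = v"
proof -
  obtain xs where xs: "walk V E xs" "hd xs = u" "last xs = v" "length xs = Suc (gdist V E u v)"
    using conn_gdist[OF assms(1)] by blast
  then show ?thesis using walk_hd_last[OF xs(1)] assms(2) by simp
qed

lemma gdist_edge:
  assumes "conn V E r x" "{x, y} \<in> E" "y \<in> V"
  shows "gdist V E r y \<le> gdist V E r x + 1"
proof -
  have x: "x \<in> V" using conn_V[OF assms(1)] by blast
  have "gdist V E x y \<le> 1" using gdist_le[OF walk2[OF assms(2) x assms(3)]] by simp
  then show ?thesis using gdist_tri[OF assms(1) conn_edge[OF assms(2) x assms(3)]] by simp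
qed

lemma SP_sub:
  assumes "connected_graph V E" "shortest_path V E p u v" "t < length p"
  shows "gdist V E u (p ! t) = t \<and> gdist V E (p ! t) v = length p - 1 - t"
proof -
  have w: "walk V E p" and h: "hd p = u" "last p = v" and l: "length p = Suc (gdist V E u v)"
    using assms(2) unfolding shortest_path_def by auto
  have hl: "p ! 0 = u" "p ! (length p - 1) = v" using walk_hd_last[OF w] h by auto
  have 1: "gdist V E u (p ! t) \<le> t" using gdist_idx[OF w, of 0 t] assms(3) hl by simp
  have 2: "gdist V E (p ! t) v \<le> length p - 1 - t" using gdist_idx[OF w, of t "length p - 1"] assms(3) hl by simp
  have V: "u \<in> V" "v \<in> V" "p ! t \<in> V" using walk_nthV[OF w] assms(3) hl walk_len[OF w]
    by (metis diff_less zero_less_one)+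
  have "gdist V E u v \<le> gdist V E u (p ! t) + gdist V E (p ! t) v"
    using gdist_tri connected_conn[OF assms(1)] V by metis
  then show ?thesis using 1 2 l assms(3) by linarith
qed



lemma sg_finite: "simple_graph V E \<Longrightarrow> finite E"
  unfolding simple_graph_def by (meson Pow_iff finite_Pow_iff finite_subset subsetI)

lemma sg_V: "simple_graph V E \<Longrightarrow> {x, y} \<in> E \<Longrightarrow> x \<in> V \<and> y \<in> V"
  unfolding simple_graph_def by blast

lemma sg_neq: "simple_graph V E \<Longrightarrow> {x, y} \<in> E \<Longrightarrow> x \<noteq> y"
  unfolding simple_graph_def by fastforce

lemma count_K:
  assumes sg: "simple_graph V E" and cg: "connected_graph V E" and r: "r \<in> V"
  shows "card (V - {r}) + card {f \<in> E. \<exists>x y. f = {x, y} \<and> gdist V E r x = gdist V E r y} \<le> card E"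
proof -
  define D where "D = gdist V E r"
  have par: "\<exists>u. {u, v} \<in> E \<and> D u + 1 = D v" if v: "v \<in> V - {r}" for v
  proof -
    have c: "conn V E r v" using connected_conn[OF cg r] v by blast
    obtain xs where xs: "walk V E xs" "hd xs = r" "last xs = v" "length xs = Suc (D v)"
      using conn_gdist[OF c] unfolding D_def by blast
    have "D v \<noteq> 0" using gdist_0[OF c] v unfolding D_def by blast
    then obtain k where k: "D v = Suc k" by (metis not0_implies_Suc)
    have hl: "xs ! 0 = r" "xs ! Suc k = v" using walk_hd_last[OF xs(1)] xs k by auto
    have e: "{xs ! k, v} \<in> E" using walk_nthE[OF xs(1), of k] xs k hl by simp
    have "D (xs ! k) \<le> k" using gdist_idx[OF xs(1), of 0 k] xs k hl unfolding D_def by simp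
    moreover have "D v \<le> D (xs ! k) + 1"
      unfolding D_def
      by (rule gdist_edge[OF connected_conn[OF cg r] e]) (use walk_nthV[OF xs(1), of k] xs k v in auto)
    ultimately have "D (xs ! k) + 1 = D v" using k by simp
    then show ?thesis using e by blast
  qed
  define par where "par v = (SOME u. {u, v} \<in> E \<and> D u + 1 = D v)" for v
  have parP: "{par v, v} \<in> E \<and> D (par v) + 1 = D v" if "v \<in> V - {r}" for v
    unfolding par_def using someI_ex[OF par[OF that]] .
  define PE where "PE = (\<lambda>v. {par v, v}) ` (V - {r})"
  define SL where "SL = {f \<in> E. \<exists>x y. f = {x, y} \<and> gdist V E r x = gdist V E r y}"
  have inj: "inj_on (\<lambda>v. {par v, v}) (V - {r})"
  proof (rule inj_onI)
    fix v w assume vw: "v \<in> V - {r}" "w \<in> V - {r}" "{par v, v} = {par w, w}"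
    then have "(par v = par w \<and> v = w) \<or> (par v = w \<and> v = par w)" by (simp add: doubleton_eq_iff)
    then show "v = w" using parP[OF vw(1)] parP[OF vw(2)] by auto
  qed
  have disj: "PE \<inter> SL = {}"
  proof (rule ccontr)
    assume "PE \<inter> SL \<noteq> {}"
    then obtain v x y where v: "v \<in> V - {r}" "{par v, v} = {x, y}" "D x = D y"
      unfolding PE_def SL_def D_def by blast
    then have "(par v = x \<and> v = y) \<or> (par v = y \<and> v = x)" by (simp add: doubleton_eq_iff)
    then show False using parP[OF v(1)] v(3) by auto
  qed
  have fin: "finite E" using sg_finite[OF sg] .
  have sub: "PE \<union> SL \<subseteq> E" unfolding PE_def SL_def using parP by auto
  have "card PE = card (V - {r})" unfolding PE_def using card_image[OF inj] .
  moreover have "card PE + card SL = card (PE \<union> SL)"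
    using disj fin sub by (metis card_Un_disjoint finite_Un finite_subset)
  moreover have "card (PE \<union> SL) \<le> card E" using card_mono[OF fin sub] .
  ultimately show ?thesis unfolding SL_def by simp
qed

definition tree :: "'a set \<Rightarrow> 'a set set \<Rightarrow> bool" where
  "tree V T \<longleftrightarrow> simple_graph V T \<and> connected_graph V T \<and> card T + 1 = card V"

lemma tree_nolevel:
  assumes t: "tree V T" and r: "r \<in> V" and e: "{x, y} \<in> T"
  shows "gdist V T r x \<noteq> gdist V T r y"
proof
  assume eq: "gdist V T r x = gdist V T r y"
  have sg: "simple_graph V T" and cg: "connected_graph V T" and c: "card T + 1 = card V"
    using t unfolding tree_def by auto
  define SL where "SL = {f \<in> T. \<exists>x y. f = {x, y} \<and> gdist V T r x = gdist V T r y}"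
  have fV: "finite V" using sg unfolding simple_graph_def by blast
  have "card (V - {r}) = card T" using c r fV by simp
  then have "card SL = 0" using count_K[OF sg cg r] unfolding SL_def by simp
  moreover have "finite SL" unfolding SL_def using sg_finite[OF sg] by simp
  moreover have "{x, y} \<in> SL" unfolding SL_def using e eq by blast
  ultimately show False by auto
qed

lemma tree_step:
  assumes t: "tree V T" and r: "r \<in> V" and e: "{x, y} \<in> T"
  shows "gdist V T r y = gdist V T r x + 1 \<or> gdist V T r x = gdist V T r y + 1"
proof -
  have sg: "simple_graph V T" and cg: "connected_graph V T" using t unfolding tree_def by auto
  have xy: "x \<in> V" "y \<in> V" using sg_V[OF sg e] by auto
  have e': "{y, x} \<in> T" using e by (simp add: insert_commute)
  have "gdist V T r y \<le> gdist V T r x + 1" using gdist_edge[OF connected_conn[OF cg r xy(1)] e xy(2)] .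
  moreover have "gdist V T r x \<le> gdist V T r y + 1" using gdist_edge[OF connected_conn[OF cg r xy(2)] e' xy(1)] .
  moreover have "gdist V T r x \<noteq> gdist V T r y" using tree_nolevel[OF t r e] .
  ultimately show ?thesis by linarith
qed

lemma tree_parity:
  assumes t: "tree V T" and r: "r \<in> V"
    and ed: "\<forall>s. a \<le> s \<longrightarrow> Suc s \<le> b \<longrightarrow> {xs ! s, xs ! Suc s} \<in> T"
    and ab: "a \<le> b"
  shows "even (b - a + gdist V T r (xs ! a) + gdist V T r (xs ! b))"
  using ab ed
proof (induction b)
  case 0 then show ?case by simp
next
  case (Suc b)
  show ?case
  proof (cases "a = Suc b")
    case True then show ?thesis by simp
  next
    case False
    then have ab: "a \<le> b" using Suc.prems by simp
    then have IH: "even (b - a + gdist V T r (xs ! a) + gdist V T r (xs ! b))" using Suc by simp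
    have "{xs ! b, xs ! Suc b} \<in> T" using Suc.prems ab by simp
    then have st: "gdist V T r (xs ! Suc b) = gdist V T r (xs ! b) + 1 \<or> gdist V T r (xs ! b) = gdist V T r (xs ! Suc b) + 1"
      using tree_step[OF t r] by blast
    have "Suc b - a = Suc (b - a)" using ab by simp
    then show ?thesis using IH st by auto
  qed
qed

lemma tree_bridge:
  assumes t: "tree V T" and e: "{l, m} \<in> T" and c: "conn V (T - {{l, m}}) l m"
  shows False
proof -
  have sg: "simple_graph V T" and cg: "connected_graph V T" and cd: "card T + 1 = card V"
    using t unfolding tree_def by auto
  have lV: "l \<in> V" using sg_V[OF sg e] by blast
  have cg': "connected_graph V (T - {{l, m}})"
    unfolding connected_graph_def
  proof (intro ballI)
    fix u v assume uv: "u \<in> V" "v \<in> V"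
    obtain xs where xs: "walk V T xs" "hd xs = u" "last xs = v" using cg uv unfolding connected_graph_def by blast
    have step: "conn V (T - {{l, m}}) u y"
      if xy: "{x, y} \<in> T" "x \<in> V" "y \<in> V" "conn V (T - {{l, m}}) u x" for x y
    proof (cases "{x, y} = {l, m}")
      case True
      then have "(x = l \<and> y = m) \<or> (x = m \<and> y = l)" by (simp add: doubleton_eq_iff)
      then have "conn V (T - {{l, m}}) x y" using c conn_sym[OF c] by (elim disjE conjE) simp_all
      then show ?thesis using conn_trans[OF xy(4)] by blast
    next
      case False
      then have "{x, y} \<in> T - {{l, m}}" using xy(1) by simp
      then have "conn V (T - {{l, m}}) x y" by (rule conn_edge[OF _ xy(2,3)])
      then show ?thesis using conn_trans[OF xy(4)] by blast
    qed
    have base: "conn V (T - {{l, m}}) u (hd xs)" using xs(2) conn_refl[OF uv(1)] by simp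
    have "conn V (T - {{l, m}}) u (last xs)"
      by (rule walk_induct_last[where P="conn V (T - {{l, m}}) u", OF xs(1) base]) (rule step; assumption)
    then show "\<exists>xs. walk V (T - {{l, m}}) xs \<and> hd xs = u \<and> last xs = v" using xs(3) unfolding conn_def by blast
  qed
  have sg': "simple_graph V (T - {{l, m}})" using sg unfolding simple_graph_def by blast
  have fV: "finite V" using sg unfolding simple_graph_def by blast
  have fT: "finite T" using sg_finite[OF sg] .
  have "card (V - {l}) \<le> card (T - {{l, m}})"
    using count_K[OF sg' cg' lV] by linarith
  moreover have "card (V - {l}) = card V - 1" using lV fV by simp
  moreover have "card (T - {{l, m}}) = card T - 1" using e fT by simp
  moreover have "card T \<noteq> 0" using e fT by (metis card_0_eq empty_iff)
  ultimately show False using cd by simp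
qed



definition cv :: "'a list \<Rightarrow> nat \<Rightarrow> 'a" where
  "cv cyc t = cyc ! (t mod length cyc)"

lemma cyc_basic: assumes "is_cycle V E cyc"
  shows "length cyc \<ge> 3" "distinct cyc" "walk V E cyc" "{last cyc, hd cyc} \<in> E"
  using assms unfolding is_cycle_def by auto

lemma cyc_pos: assumes "is_cycle V E cyc" shows "0 < length cyc" "cyc \<noteq> []"
  using cyc_basic(1)[OF assms] by auto

lemma cv_in: assumes "is_cycle V E cyc" shows "cv cyc t \<in> set cyc"
  unfolding cv_def using cyc_pos[OF assms] by simp

lemma cv_eq: assumes "is_cycle V E cyc" shows "cv cyc s = cv cyc t \<longleftrightarrow> s mod length cyc = t mod length cyc"
  unfolding cv_def using cyc_pos[OF assms] cyc_basic(2)[OF assms] by (simp add: nth_eq_iff_index_eq)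

lemma cv_small: "t < length cyc \<Longrightarrow> cv cyc t = cyc ! t"
  unfolding cv_def by simp

lemma cv_edge: assumes c: "is_cycle V E cyc" shows "{cv cyc t, cv cyc (Suc t)} \<in> E"
proof -
  note b = cyc_basic[OF c]
  define L where "L = length cyc"
  have L: "L \<ge> 3" using b L_def by simp
  have tl: "t mod L < L" using L by simp
  show ?thesis
  proof (cases "Suc (t mod L) < L")
    case True
    then have "Suc t mod L = Suc (t mod L)" by (simp add: mod_Suc)
    then show ?thesis using walk_nthE[OF b(3), of "t mod L"] True unfolding cv_def L_def by simp
  next
    case False
    then have 1: "Suc (t mod L) = L" using tl by simp
    then have "Suc t mod L = 0" by (simp add: mod_Suc)
    moreover have "cyc ! (t mod L) = last cyc"
    proof -
      have "t mod L = length cyc - 1" using 1 L_def by simp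
      then show ?thesis using cyc_pos[OF c] by (simp add: last_conv_nth)
    qed
    moreover have "cyc ! 0 = hd cyc" using cyc_pos[OF c] by (simp add: hd_conv_nth)
    ultimately show ?thesis using b(4) unfolding cv_def L_def by (simp add: insert_commute)
  qed
qed

lemma cycle_edges_cv: assumes c: "is_cycle V E cyc" and e: "e \<in> cycle_edges cyc"
  shows "\<exists>k<length cyc. e = {cv cyc k, cv cyc (Suc k)}"
proof -
  note b = cyc_basic[OF c]
  define L where "L = length cyc"
  have L: "L \<ge> 3" using b L_def by simp
  show ?thesis
  proof (cases "e = {last cyc, hd cyc}")
    case True
    have "cv cyc (L - 1) = last cyc" using cyc_pos[OF c] unfolding cv_def L_def
      by (simp add: last_conv_nth)
    moreover have "cv cyc (Suc (L - 1)) = hd cyc" using cyc_pos[OF c] unfolding cv_def L_def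
      by (simp add: hd_conv_nth)
    moreover have "L - 1 < L" using L by simp
    ultimately show ?thesis using True unfolding L_def by metis
  next
    case False
    then have "e \<in> walk_edges cyc" using e unfolding cycle_edges_def by simp
    then obtain k where k: "Suc k < L" "e = {cyc ! k, cyc ! Suc k}" unfolding walk_edges_nth L_def by blast
    moreover have "k < length cyc" using k L_def by simp
    ultimately show ?thesis using cv_small[of k cyc] cv_small[of "Suc k" cyc] unfolding L_def by metis
  qed
qed

lemma cycle_edge_sub: assumes c: "is_cycle V E cyc" and e: "e \<in> cycle_edges cyc" shows "e \<subseteq> set cyc"
  using cycle_edges_cv[OF c e] cv_in[OF c] by auto

lemma mod_shift_ne:
  fixes n L k :: nat
  assumes "0 < n" "n < L" shows "(k + n) mod L \<noteq> k mod L"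
proof
  assume "(k + n) mod L = k mod L"
  then have "L dvd (k + n) - k" using mod_eq_dvd_iff_nat[of k "k + n" L] by simp
  then have "L dvd n" by simp
  then show False using assms by (meson dvd_imp_le not_le)
qed

lemma cv_edge_inj:
  assumes c: "is_cycle V E cyc" and eq: "{cv cyc s, cv cyc (Suc s)} = {cv cyc k, cv cyc (Suc k)}"
  shows "s mod length cyc = k mod length cyc"
proof -
  define L where "L = length cyc"
  have L: "L \<ge> 3" using cyc_basic[OF c] L_def by simp
  have "(cv cyc s = cv cyc k \<and> cv cyc (Suc s) = cv cyc (Suc k)) \<or> (cv cyc s = cv cyc (Suc k) \<and> cv cyc (Suc s) = cv cyc k)"
    using eq by (simp add: doubleton_eq_iff)
  then show ?thesis
  proof
    assume "cv cyc s = cv cyc k \<and> cv cyc (Suc s) = cv cyc (Suc k)"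
    then show ?thesis using cv_eq[OF c] by blast
  next
    assume a: "cv cyc s = cv cyc (Suc k) \<and> cv cyc (Suc s) = cv cyc k"
    then have 1: "s mod L = Suc k mod L" "Suc s mod L = k mod L" using cv_eq[OF c] L_def by auto
    have "Suc s mod L = Suc (s mod L) mod L" by (simp add: mod_Suc_eq)
    also have "\<dots> = Suc (Suc k mod L) mod L" using 1 by simp
    also have "\<dots> = (k + 2) mod L" by (simp add: mod_Suc_eq)
    finally have "(k + 2) mod L = k mod L" using 1 by simp
    then show ?thesis using mod_shift_ne[of 2 L k] L by simp
  qed
qed

lemma arc_walk:
  assumes c: "is_cycle V E cyc"
    and F: "\<forall>s. s mod length cyc \<noteq> k mod length cyc \<longrightarrow> {cv cyc s, cv cyc (Suc s)} \<in> F"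
  shows "walk V F (map (\<lambda>t. cv cyc (Suc k + t)) [0..<length cyc])"
  unfolding walk_map
proof (intro conjI allI impI)
  show "0 < length cyc" using cyc_pos[OF c] by simp
next
  fix s show "cv cyc (Suc k + s) \<in> V" using cv_in[OF c] cyc_basic(3)[OF c] unfolding walk_def by blast
next
  fix s assume s: "Suc s < length cyc"
  have "(k + Suc s) mod length cyc \<noteq> k mod length cyc" using mod_shift_ne[of "Suc s" "length cyc" k] s by simp
  then show "{cv cyc (Suc k + s), cv cyc (Suc k + Suc s)} \<in> F" using F by simp
qed

lemma arc_hd_last:
  assumes c: "is_cycle V E cyc"
  shows "hd (map (\<lambda>t. cv cyc (Suc k + t)) [0..<length cyc]) = cv cyc (Suc k)"
    "last (map (\<lambda>t. cv cyc (Suc k + t)) [0..<length cyc]) = cv cyc k"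
proof -
  obtain n where n: "length cyc = Suc n" using cyc_pos[OF c] gr0_implies_Suc by blast
  show "hd (map (\<lambda>t. cv cyc (Suc k + t)) [0..<length cyc]) = cv cyc (Suc k)" using n by simp
  have "Suc k + n = k + length cyc" using n by simp
  then have "cv cyc (Suc k + n) = cv cyc k" by (simp only: cv_def mod_add_self2)
  then show "last (map (\<lambda>t. cv cyc (Suc k + t)) [0..<length cyc]) = cv cyc k" using n by simp
qed

lemma arc_cover:
  assumes c: "is_cycle V E cyc" and v: "v \<in> set cyc"
  shows "\<exists>b<length cyc. cv cyc (Suc k + b) = v"
proof -
  define L where "L = length cyc"
  have L: "L > 0" using cyc_pos[OF c] L_def by simp
  obtain t where t: "t < L" "cyc ! t = v" using v L_def by (metis in_set_conv_nth)
  define b where "b = (t + (L - Suc k mod L)) mod L"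
  define a where "a = Suc k mod L"
  have aL: "a < L" unfolding a_def using L by simp
  have "(Suc k + b) mod L = (a + b) mod L" unfolding a_def by (simp add: mod_add_left_eq)
  also have "\<dots> = (a + (t + (L - a))) mod L" unfolding b_def a_def by (simp add: mod_add_right_eq)
  also have "a + (t + (L - a)) = t + L" using aL by simp
  also have "(t + L) mod L = t" using t by simp
  finally have "cv cyc (Suc k + b) = v" unfolding cv_def L_def using t L_def by simp
  moreover have "b < L" unfolding b_def using L by simp
  ultimately show ?thesis unfolding L_def by blast
qed

lemma cyc_conn:
  assumes c: "is_cycle V E cyc"
    and F: "\<forall>s. s mod length cyc \<noteq> k mod length cyc \<longrightarrow> {cv cyc s, cv cyc (Suc s)} \<in> F"
    and v: "v \<in> set cyc" and w: "w \<in> set cyc"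
  shows "conn V F v w"
proof -
  define A where "A = map (\<lambda>t. cv cyc (Suc k + t)) [0..<length cyc]"
  have A: "walk V F A" using arc_walk[OF c F] unfolding A_def .
  have cs: "conn V F (cv cyc (Suc k)) u" if u: "u \<in> set cyc" for u
  proof -
    obtain b where b: "b < length cyc" "cv cyc (Suc k + b) = u" using arc_cover[OF c u] by blast
    have "conn V F (A ! 0) (A ! b)" using conn_walk_sub[OF A, of 0 b] b unfolding A_def by simp
    then show ?thesis using b cyc_pos[OF c] unfolding A_def by simp
  qed
  show ?thesis using conn_trans[OF conn_sym[OF cs[OF v]] cs[OF w]] .
qed



lemma connected_lift:
  assumes cg: "connected_graph V E"
    and ed: "\<And>x y. {x, y} \<in> E \<Longrightarrow> x \<in> V \<Longrightarrow> y \<in> V \<Longrightarrow> conn V F x y"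
  shows "connected_graph V F"
  unfolding connected_graph_def
proof (intro ballI)
  fix u v assume uv: "u \<in> V" "v \<in> V"
  obtain xs where xs: "walk V E xs" "hd xs = u" "last xs = v" using cg uv unfolding connected_graph_def by blast
  have step: "conn V F u y"
    if xy: "{x, y} \<in> E" "x \<in> V" "y \<in> V" "conn V F u x" for x y
    using conn_trans[OF xy(4) ed[OF xy(1-3)]] .
  have base: "conn V F u (hd xs)" using xs(2) conn_refl[OF uv(1)] by simp
  have "conn V F u (last xs)"
    by (rule walk_induct_last[where P="conn V F u", OF xs(1) base]) (rule step; assumption)
  then show "\<exists>xs. walk V F xs \<and> hd xs = u \<and> last xs = v" using xs(3) unfolding conn_def by blast
qed

lemma unicyclic_basic: assumes "unicyclic V E"
  shows "simple_graph V E" "connected_graph V E" "card E = card V" "finite V" "finite E"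
  using assms sg_finite unfolding unicyclic_def simple_graph_def by auto

lemma cyc_edges_F:
  assumes c: "is_cycle V E cyc" and F: "F = E - {{cv cyc k, cv cyc (Suc k)}} - X"
    and X: "\<forall>f\<in>X. \<not> f \<subseteq> set cyc"
  shows "\<forall>s. s mod length cyc \<noteq> k mod length cyc \<longrightarrow> {cv cyc s, cv cyc (Suc s)} \<in> F"
proof (intro allI impI)
  fix s assume s: "s mod length cyc \<noteq> k mod length cyc"
  have "{cv cyc s, cv cyc (Suc s)} \<noteq> {cv cyc k, cv cyc (Suc k)}"
  proof
    assume "{cv cyc s, cv cyc (Suc s)} = {cv cyc k, cv cyc (Suc k)}"
    then have "s mod length cyc = k mod length cyc" by (rule cv_edge_inj[OF c])
    then show False using s by simp
  qed
  moreover have "{cv cyc s, cv cyc (Suc s)} \<notin> X"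
  proof
    assume "{cv cyc s, cv cyc (Suc s)} \<in> X"
    note X[rule_format, OF this]
    moreover have "{cv cyc s, cv cyc (Suc s)} \<subseteq> set cyc" using cv_in[OF c] by simp
    ultimately show False by contradiction
  qed
  ultimately show "{cv cyc s, cv cyc (Suc s)} \<in> F" using F cv_edge[OF c] by simp
qed

lemma tree_minus:
  assumes U: "unicyclic V E" and c: "is_cycle V E cyc" and e0: "e0 \<in> cycle_edges cyc"
  shows "tree V (E - {e0})"
proof -
  note u = unicyclic_basic[OF U]
  obtain k where k: "k < length cyc" "e0 = {cv cyc k, cv cyc (Suc k)}" using cycle_edges_cv[OF c e0] by blast
  have F: "\<forall>s. s mod length cyc \<noteq> k mod length cyc \<longrightarrow> {cv cyc s, cv cyc (Suc s)} \<in> E - {e0}"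
    using cyc_edges_F[OF c _, of "E - {e0}" k "{}"] k by simp
  have sg: "simple_graph V (E - {e0})" using u(1) unfolding simple_graph_def by blast
  have cg: "connected_graph V (E - {e0})"
  proof (rule connected_lift[OF u(2)])
    fix x y assume xy: "{x, y} \<in> E" "x \<in> V" "y \<in> V"
    show "conn V (E - {e0}) x y"
    proof (cases "{x, y} = e0")
      case True
      then have "x \<in> set cyc" "y \<in> set cyc" using cycle_edge_sub[OF c e0] by auto
      then show ?thesis using cyc_conn[OF c F] by blast
    next
      case False
      then have "{x, y} \<in> E - {e0}" using xy(1) by simp
      then show ?thesis by (rule conn_edge[OF _ xy(2,3)])
    qed
  qed
  have "e0 \<in> E" using k cv_edge[OF c] by simp
  then have "card (E - {e0}) + 1 = card E" using u(5) by (simp add: card_Diff_singleton)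
    (metis Suc_pred card_gt_0_iff empty_iff)
  then show ?thesis unfolding tree_def using sg cg u(3) by simp
qed

lemma SP_inj:
  assumes cg: "connected_graph V E" and sp: "shortest_path V E p u v"
    and ab: "a < length p" "b < length p" and eq: "p ! a = p ! b"
  shows "a = b"
proof -
  have "a = gdist V E u (p ! a)" using SP_sub[OF cg sp ab(1)] by simp
  also have "\<dots> = gdist V E u (p ! b)" using eq by simp
  also have "\<dots> = b" using SP_sub[OF cg sp ab(2)] by simp
  finally show ?thesis .
qed

lemma SP_edge_inj:
  assumes cg: "connected_graph V E" and sp: "shortest_path V E p u v"
    and ab: "Suc s < length p" "Suc k < length p" and eq: "{p ! s, p ! Suc s} = {p ! k, p ! Suc k}"
  shows "s = k"
proof -
  have "(p ! s = p ! k \<and> p ! Suc s = p ! Suc k) \<or> (p ! s = p ! Suc k \<and> p ! Suc s = p ! k)"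
    using eq by (simp add: doubleton_eq_iff)
  then show ?thesis
  proof
    assume "p ! s = p ! k \<and> p ! Suc s = p ! Suc k"
    then have "p ! s = p ! k" by simp
    then show ?thesis using SP_inj[OF cg sp, of s k] ab by linarith
  next
    assume a: "p ! s = p ! Suc k \<and> p ! Suc s = p ! k"
    then have "p ! s = p ! Suc k" "p ! Suc s = p ! k" by simp_all
    then have "s = Suc k" "Suc s = k" using SP_inj[OF cg sp, of s "Suc k"] SP_inj[OF cg sp, of "Suc s" k] ab by linarith+
    then show ?thesis by simp
  qed
qed

lemma PTC:
  assumes cg: "connected_graph V E" and c: "is_cycle V E cyc" and ptc: "path_to_cycle V E cyc i p"
  shows "\<exists>ist. ist \<in> set cyc \<and> shortest_path V E p i ist \<and> walk V E p \<and> hd p = i \<and> last p = ist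
     \<and> length p = Suc (gdist V E i ist)
     \<and> (\<forall>t<length p. gdist V E i (p ! t) = t \<and> gdist V E (p ! t) ist = length p - 1 - t)
     \<and> (\<forall>t. Suc t < length p \<longrightarrow> p ! t \<notin> set cyc)
     \<and> (\<forall>c'\<in>set cyc. gdist V E i ist \<le> gdist V E i c')
     \<and> (\<forall>t<length p. \<forall>c'\<in>set cyc. length p - 1 - t \<le> gdist V E (p ! t) c')"
proof -
  obtain ist where ist: "ist \<in> set cyc" "shortest_path V E p i ist" "\<forall>c'\<in>set cyc. gdist V E i ist \<le> gdist V E i c'"
    using ptc unfolding path_to_cycle_def by blast
  have w: "walk V E p" "hd p = i" "last p = ist" "length p = Suc (gdist V E i ist)"
    using ist(2) unfolding shortest_path_def by auto
  have sub: "\<forall>t<length p. gdist V E i (p ! t) = t \<and> gdist V E (p ! t) ist = length p - 1 - t"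
    using SP_sub[OF cg ist(2)] by blast
  have nc: "\<forall>t. Suc t < length p \<longrightarrow> p ! t \<notin> set cyc"
  proof (intro allI impI notI)
    fix t assume t: "Suc t < length p" "p ! t \<in> set cyc"
    then have "gdist V E i ist \<le> t" using ist(3) sub by fastforce
    then show False using w(4) t(1) by simp
  qed
  have V: "i \<in> V" using walk_nthV[OF w(1), of 0] walk_len[OF w(1)] walk_hd_last[OF w(1)] w(2) by simp
  have dc: "\<forall>t<length p. \<forall>c'\<in>set cyc. length p - 1 - t \<le> gdist V E (p ! t) c'"
  proof (intro allI impI ballI)
    fix t c' assume t: "t < length p" and c': "c' \<in> set cyc"
    have c'V: "c' \<in> V" using c' cyc_basic(3)[OF c] unfolding walk_def by blast
    have ptV: "p ! t \<in> V" using walk_nthV[OF w(1) t] .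
    have "gdist V E i c' \<le> gdist V E i (p ! t) + gdist V E (p ! t) c'"
      using gdist_tri[OF connected_conn[OF cg V ptV] connected_conn[OF cg ptV c'V]] .
    then show "length p - 1 - t \<le> gdist V E (p ! t) c'" using sub t ist(3) c' w(4) by fastforce
  qed
  show ?thesis using ist w sub nc dc by blast
qed



lemma edist2: "edist V E {a, b} x = min (gdist V E x a) (gdist V E x b)"
  unfolding edist_def by simp

lemma comp_mem:
  assumes "e \<notin> cycle_edges cyc" "c \<in> set cyc" "conn V (E - {e}) c v"
  shows "v \<in> comp_C V E cyc e"
proof -
  obtain xs where xs: "walk V (E - {e}) xs" "hd xs = c" "last xs = v" using assms(3) unfolding conn_def by blast
  have "v \<in> V" using conn_V[OF assms(3)] by blast
  then show ?thesis unfolding comp_C_def using assms(1,2) xs by auto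
qed

lemma comp_conn:
  assumes "e \<notin> cycle_edges cyc" "v \<in> comp_C V E cyc e"
  shows "\<exists>c\<in>set cyc. conn V (E - {e}) c v"
  using assms unfolding comp_C_def conn_def by auto

lemma PC:
  assumes U: "unicyclic V E" and c: "is_cycle V E cyc" and ptc: "path_to_cycle V E cyc i p"
    and e: "e \<in> walk_edges p"
  shows "e \<notin> cycle_edges cyc \<and> i \<notin> comp_C V E cyc e"
proof -
  note u = unicyclic_basic[OF U]
  obtain ist where P: "ist \<in> set cyc" "shortest_path V E p i ist" "walk V E p" "hd p = i" "last p = ist"
     "length p = Suc (gdist V E i ist)"
     "\<forall>t<length p. gdist V E i (p ! t) = t \<and> gdist V E (p ! t) ist = length p - 1 - t"
     "\<forall>t. Suc t < length p \<longrightarrow> p ! t \<notin> set cyc"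
    using PTC[OF u(2) c ptc] by blast
  obtain k where k: "Suc k < length p" "e = {p ! k, p ! Suc k}" using e unfolding walk_edges_nth by blast
  have lnc: "p ! k \<notin> set cyc" using P(8) k(1) by blast
  have ensub: "\<not> e \<subseteq> set cyc" using lnc k(2) by simp
  have nce: "e \<notin> cycle_edges cyc" using ensub cycle_edge_sub[OF c] by blast
  have "i \<notin> comp_C V E cyc e"
  proof
    assume "i \<in> comp_C V E cyc e"
    then obtain c0 where c0: "c0 \<in> set cyc" "conn V (E - {e}) c0 i" using comp_conn[OF nce] by blast
    define e0 where "e0 = {cv cyc 0, cv cyc (Suc 0)}"
    have e0c: "e0 \<subseteq> set cyc" unfolding e0_def using cv_in[OF c] by simp
    define F where "F = E - {e0} - {e}"
    have Fc: "\<forall>s. s mod length cyc \<noteq> 0 mod length cyc \<longrightarrow> {cv cyc s, cv cyc (Suc s)} \<in> F"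
      using cyc_edges_F[OF c, of F 0 "{e}"] ensub unfolding F_def e0_def by simp
    have CC: "conn V F v w" if "v \<in> set cyc" "w \<in> set cyc" for v w
      using cyc_conn[OF c Fc that] .
    obtain W where W: "walk V (E - {e}) W" "hd W = c0" "last W = i" using c0(2) unfolding conn_def by blast
    have c0V: "c0 \<in> V" using conn_V[OF c0(2)] by blast
    have step: "\<exists>c\<in>set cyc. conn V F c y"
      if xy: "{x, y} \<in> E - {e}" "x \<in> V" "y \<in> V" "\<exists>c\<in>set cyc. conn V F c x" for x y
    proof (cases "{x, y} = e0")
      case True
      have "y \<in> {x, y}" by simp
      then have "y \<in> e0" using True by simp
      then have "y \<in> set cyc" using e0c by (rule subsetD[rotated])
      then show ?thesis using conn_refl[OF xy(3)] by (rule bexI[rotated])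
    next
      case False
      then have "{x, y} \<in> F" using xy(1) unfolding F_def by simp
      then have "conn V F x y" by (rule conn_edge[OF _ xy(2,3)])
      obtain c2 where "c2 \<in> set cyc" "conn V F c2 x" using xy(4) by blast
      then show ?thesis using conn_trans[OF _ \<open>conn V F x y\<close>] by blast
    qed
    have base: "\<exists>c\<in>set cyc. conn V F c (hd W)" unfolding W(2) using c0(1) conn_refl[OF c0V] by (rule bexI[rotated])
    have "\<exists>c\<in>set cyc. conn V F c (last W)"
      by (rule walk_induct_last[where P="\<lambda>v. \<exists>c\<in>set cyc. conn V F c v", OF W(1) base]) (rule step; assumption)
    then obtain c1 where c1: "c1 \<in> set cyc" "conn V F c1 i" using W(3) by blast
    have 1: "conn V F ist i" using conn_trans[OF CC[OF P(1) c1(1)] c1(2)] .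
    have pV: "\<forall>s<length p. p ! s \<in> V" using walk_nthV[OF P(3)] by blast
    have pE: "{p ! s, p ! Suc s} \<in> F" if s: "Suc s < length p" "s \<noteq> k" for s
    proof -
      have "{p ! s, p ! Suc s} \<in> E" using walk_nthE[OF P(3) s(1)] .
      moreover have "{p ! s, p ! Suc s} \<noteq> e0"
      proof
        assume "{p ! s, p ! Suc s} = e0"
        then have "p ! s \<in> set cyc" using e0c by auto
        then show False using P(8) s(1) by blast
      qed
      moreover have "{p ! s, p ! Suc s} \<noteq> e"
      proof
        assume "{p ! s, p ! Suc s} = e"
        then have "s = k" using SP_edge_inj[OF u(2) P(2) s(1) k(1)] k(2) by simp
        then show False using s(2) by simp
      qed
      ultimately show ?thesis unfolding F_def by simp
    qed
    have 2: "conn V F (p ! 0) (p ! k)"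
      by (rule conn_idx) (use pE pV k(1) in auto)
    have 3: "conn V F (p ! Suc k) (p ! (length p - 1))"
      by (rule conn_idx) (use pE pV k(1) in auto)
    have hl: "p ! 0 = i" "p ! (length p - 1) = ist" using walk_hd_last[OF P(3)] P(4,5) by auto
    have h2: "conn V F i (p ! k)" using 2 hl by simp
    have h3: "conn V F (p ! Suc k) ist" using 3 hl by simp
    have "conn V F (p ! k) (p ! Suc k)"
      using conn_trans[OF conn_trans[OF conn_sym[OF h2] conn_sym[OF 1]] conn_sym[OF h3]] .
    then have cl: "conn V ((E - {e0}) - {{p ! k, p ! Suc k}}) (p ! k) (p ! Suc k)" unfolding F_def k(2) .
    have e0ce: "e0 \<in> cycle_edges cyc"
    proof -
      have "{cyc ! 0, cyc ! Suc 0} \<in> walk_edges cyc" unfolding walk_edges_nth using cyc_basic(1)[OF c] by force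
      moreover have "cv cyc 0 = cyc ! 0" "cv cyc (Suc 0) = cyc ! Suc 0" using cyc_basic(1)[OF c] cyc_pos[OF c] by (simp_all add: cv_small)
      ultimately show ?thesis unfolding e0_def cycle_edges_def by simp
    qed
    have "{p ! k, p ! Suc k} \<in> E - {e0}"
    proof -
      have "e \<in> E" using walk_nthE[OF P(3) k(1)] k(2) by simp
      moreover have "e \<noteq> e0" using ensub e0c by auto
      ultimately show ?thesis using k(2) by simp
    qed
    then show False using tree_bridge[OF tree_minus[OF U c e0ce] _ cl] by blast
  qed
  then show ?thesis using nce by blast
qed



lemma PC2:
  assumes U: "unicyclic V E" and c: "is_cycle V E cyc" and ptc: "path_to_cycle V E cyc i p"
    and nce: "e \<notin> cycle_edges cyc" and ni: "i \<notin> comp_C V E cyc e"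
  shows "e \<in> walk_edges p"
proof (rule ccontr)
  assume ne: "e \<notin> walk_edges p"
  note u = unicyclic_basic[OF U]
  obtain ist where P: "ist \<in> set cyc" "shortest_path V E p i ist" "walk V E p" "hd p = i" "last p = ist"
    using PTC[OF u(2) c ptc] by blast
  have pV: "\<forall>s<length p. p ! s \<in> V" using walk_nthV[OF P(3)] by blast
  have pE: "{p ! s, p ! Suc s} \<in> E - {e}" if s: "Suc s < length p" for s
  proof -
    have "{p ! s, p ! Suc s} \<in> walk_edges p" unfolding walk_edges_nth using s by blast
    then show ?thesis using walk_nthE[OF P(3) s] ne by auto
  qed
  have hl: "p ! 0 = i" "p ! (length p - 1) = ist" using walk_hd_last[OF P(3)] P(4,5) by auto
  have lp: "0 < length p" using walk_len[OF P(3)] .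
  have A1: "\<forall>s. 0 \<le> s \<longrightarrow> Suc s \<le> length p - 1 \<longrightarrow> {p ! s, p ! Suc s} \<in> E - {e}"
    using pE lp by auto
  have A2: "\<forall>s\<le>length p - 1. p ! s \<in> V"
  proof (intro allI impI)
    fix s assume "s \<le> length p - 1" then have "s < length p" using lp by linarith
    then show "p ! s \<in> V" using pV by blast
  qed
  have "conn V (E - {e}) (p ! 0) (p ! (length p - 1))"
    by (rule conn_idx[OF A1 A2]) simp
  then have "conn V (E - {e}) ist i" using hl conn_sym by metis
  then have "i \<in> comp_C V E cyc e" using comp_mem[OF nce P(1)] by blast
  then show False using ni by blast
qed

lemma PA:
  assumes cg: "connected_graph V E" and sp: "shortest_path V E p i j" and e: "e \<in> walk_edges p"
  shows "even (edist V E e i + edist V E e j) \<longleftrightarrow> \<not> even (gdist V E i j)"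
proof -
  obtain k where k: "Suc k < length p" "e = {p ! k, p ! Suc k}" using e unfolding walk_edges_nth by blast
  have w: "walk V E p" "hd p = i" "last p = j" "length p = Suc (gdist V E i j)"
    using sp unfolding shortest_path_def by auto
  have s1: "gdist V E i (p ! k) = k" "gdist V E (p ! k) j = length p - 1 - k"
    using SP_sub[OF cg sp, of k] k(1) by auto
  have s2: "gdist V E i (p ! Suc k) = Suc k" "gdist V E (p ! Suc k) j = length p - 1 - Suc k"
    using SP_sub[OF cg sp, of "Suc k"] k(1) by auto
  have V2: "p ! k \<in> V" "p ! Suc k \<in> V" using walk_nthV[OF w(1)] k(1) by simp_all
  have "p ! (length p - 1) \<in> V" using walk_nthV[OF w(1)] k(1) by simp
  then have V: "j \<in> V" "p ! k \<in> V" "p ! Suc k \<in> V" using walk_hd_last[OF w(1)] w(3) V2 by simp_all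
  have t1: "gdist V E j (p ! k) = length p - 1 - k"
    using gdist_sym[OF connected_conn[OF cg V(2) V(1)]] s1 by simp
  have t2: "gdist V E j (p ! Suc k) = length p - 1 - Suc k"
    using gdist_sym[OF connected_conn[OF cg V(3) V(1)]] s2 by simp
  have "edist V E e i = k" unfolding k(2) edist2 using s1 s2 by simp
  moreover have "edist V E e j = length p - 1 - Suc k" unfolding k(2) edist2 using t1 t2 by simp
  ultimately have "edist V E e i + edist V E e j + 1 = gdist V E i j" using k(1) w(4) by simp
  then show ?thesis by (metis even_plus_one_iff)
qed

lemma cyc_V: assumes c: "is_cycle V E cyc" and v: "v \<in> set cyc" shows "v \<in> V"
  using cyc_basic(3)[OF c] v unfolding walk_def by blast

lemma walk_all_parity:
  assumes t: "tree V T" and r: "r \<in> V" and w: "walk V T xs"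
  shows "even (length xs - 1 + gdist V T r (hd xs) + gdist V T r (last xs))"
proof -
  have lp: "0 < length xs" using walk_len[OF w] .
  have A1: "\<forall>s. 0 \<le> s \<longrightarrow> Suc s \<le> length xs - 1 \<longrightarrow> {xs ! s, xs ! Suc s} \<in> T"
    using walk_nthE[OF w] lp by auto
  have "even (length xs - 1 - 0 + gdist V T r (xs ! 0) + gdist V T r (xs ! (length xs - 1)))"
    by (rule tree_parity[OF t r A1]) simp
  then show ?thesis using walk_hd_last[OF w] by simp
qed

lemma walk_minus:
  assumes w: "walk V E xs" and ne: "\<forall>s. Suc s < length xs \<longrightarrow> {xs ! s, xs ! Suc s} \<notin> X"
  shows "walk V (E - X) xs"
  using w ne unfolding walk_def by auto

lemma PB:
  assumes U: "unicyclic V E" and c: "is_cycle V E cyc" and od: "odd (length cyc)"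
    and e: "e \<in> cycle_edges cyc" and iV: "i \<in> V" and jV: "j \<in> V"
    and sp: "shortest_path V E p i j" and ne: "e \<notin> walk_edges p"
  shows "even (edist V E e i + edist V E e j) \<longleftrightarrow> even (gdist V E i j)"
proof -
  note u = unicyclic_basic[OF U]
  obtain k where k: "k < length cyc" "e = {cv cyc k, cv cyc (Suc k)}" using cycle_edges_cv[OF c e] by blast
  define a where "a = cv cyc k"
  define b where "b = cv cyc (Suc k)"
  have eab: "e = {a, b}" using k(2) a_def b_def by simp
  define T where "T = E - {e}"
  have t: "tree V T" unfolding T_def using tree_minus[OF U c e] .
  have aV: "a \<in> V" unfolding a_def using cyc_V[OF c cv_in[OF c]] .
  have bV: "b \<in> V" unfolding b_def using cyc_V[OF c cv_in[OF c]] .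
  define \<phi> where "\<phi> x = gdist V T a x" for x
  have w: "walk V E p" "hd p = i" "last p = j" "length p = Suc (gdist V E i j)"
    using sp unfolding shortest_path_def by auto
  have wT: "walk V T p" unfolding T_def
  proof (rule walk_minus[OF w(1)], intro allI impI)
    fix s assume "Suc s < length p"
    then have "{p ! s, p ! Suc s} \<in> walk_edges p" unfolding walk_edges_nth by blast
    then show "{p ! s, p ! Suc s} \<notin> {e}" using ne by auto
  qed
  have P1: "even (length p - 1 + \<phi> i + \<phi> j)" using walk_all_parity[OF t aV wT] w unfolding \<phi>_def by simp
  have FA: "\<forall>s. s mod length cyc \<noteq> k mod length cyc \<longrightarrow> {cv cyc s, cv cyc (Suc s)} \<in> T"
    using cyc_edges_F[OF c, of T k "{}"] k(2) unfolding T_def by simp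
  have Aw: "walk V T (map (\<lambda>t. cv cyc (Suc k + t)) [0..<length cyc])" using arc_walk[OF c FA] .
  have P2: "even (\<phi> b)"
  proof -
    have "even (length cyc - 1 + \<phi> b + \<phi> a)"
      using walk_all_parity[OF t aV Aw] arc_hd_last[OF c, of k] unfolding \<phi>_def a_def b_def by simp
    moreover have "\<phi> a = 0" unfolding \<phi>_def using gdist_refl[OF aV] .
    moreover have "even (length cyc - 1)" using od cyc_pos[OF c] by simp
    ultimately show ?thesis by simp
  qed
  have ED: "even (edist V E e x + \<phi> x)" if xV: "x \<in> V" for x
  proof -
    have emin: "edist V E e x = min (gdist V E x a) (gdist V E x b)" unfolding eab edist2 ..
    obtain y where y: "y = a \<or> y = b" "gdist V E x y = edist V E e x"
      using emin by (metis min_def)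
    have yV: "y \<in> V" using y(1) aV bV by blast
    obtain Q where Q: "walk V E Q" "hd Q = x" "last Q = y" "length Q = Suc (gdist V E x y)"
      using conn_gdist[OF connected_conn[OF u(2) xV yV]] by blast
    have Q0: "Q ! 0 = x" using walk_hd_last[OF Q(1)] Q(2) by simp
    have QT: "walk V T Q" unfolding T_def
    proof (rule walk_minus[OF Q(1)], intro allI impI)
      fix s assume s: "Suc s < length Q"
      show "{Q ! s, Q ! Suc s} \<notin> {e}"
      proof
        assume "{Q ! s, Q ! Suc s} \<in> {e}"
        then have eq: "{Q ! s, Q ! Suc s} = {a, b}" using eab by simp
        have "Q ! s \<in> {Q ! s, Q ! Suc s}" by simp
        then have "Q ! s \<in> {a, b}" by (simp only: eq)
        then have "edist V E e x \<le> gdist V E x (Q ! s)" using emin by auto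
        moreover have "gdist V E x (Q ! s) \<le> s" using gdist_idx[OF Q(1), of 0 s] s Q0 by simp
        ultimately show False using s Q(4) y(2) by simp
      qed
    qed
    have "even (length Q - 1 + \<phi> x + \<phi> y)" using walk_all_parity[OF t aV QT] Q unfolding \<phi>_def by simp
    moreover have "even (\<phi> y)" using y(1) P2 gdist_refl[OF aV] unfolding \<phi>_def by auto
    ultimately show ?thesis using Q(4) y(2) by simp
  qed
  show ?thesis using P1 ED[OF iV] ED[OF jV] w(4) by simp presburger
qed

lemma e0_ce: assumes c: "is_cycle V E cyc"
  shows "{cv cyc 0, cv cyc (Suc 0)} \<in> cycle_edges cyc" "{cv cyc 0, cv cyc (Suc 0)} \<subseteq> set cyc"
proof -
  have "{cyc ! 0, cyc ! Suc 0} \<in> walk_edges cyc" unfolding walk_edges_nth using cyc_basic(1)[OF c] by force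
  moreover have "cv cyc 0 = cyc ! 0" "cv cyc (Suc 0) = cyc ! Suc 0" using cyc_basic(1)[OF c] cyc_pos[OF c] by (simp_all add: cv_small)
  ultimately show "{cv cyc 0, cv cyc (Suc 0)} \<in> cycle_edges cyc" unfolding cycle_edges_def by simp
  show "{cv cyc 0, cv cyc (Suc 0)} \<subseteq> set cyc" using cv_in[OF c] by simp
qed

lemma PCc:
  assumes U: "unicyclic V E" and c: "is_cycle V E cyc"
    and iV: "i \<in> V" and jV: "j \<in> V"
    and pp: "path_to_cycle V E cyc i p" and pq: "path_to_cycle V E cyc j q"
    and ep: "e \<in> walk_edges p" and eq: "e \<in> walk_edges q"
  shows "even (edist V E e i + edist V E e j) \<longleftrightarrow> even (gdist V E i j)"
proof -
  note u = unicyclic_basic[OF U]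
  have nce: "e \<notin> cycle_edges cyc" and ni: "i \<notin> comp_C V E cyc e" using PC[OF U c pp ep] by auto
  have nj: "j \<notin> comp_C V E cyc e" using PC[OF U c pq eq] by auto
  obtain ist where P: "ist \<in> set cyc" "shortest_path V E p i ist" "walk V E p" "hd p = i" "last p = ist"
     "length p = Suc (gdist V E i ist)"
     "\<forall>t<length p. gdist V E i (p ! t) = t \<and> gdist V E (p ! t) ist = length p - 1 - t"
     "\<forall>t. Suc t < length p \<longrightarrow> p ! t \<notin> set cyc"
     "\<forall>t<length p. \<forall>c'\<in>set cyc. length p - 1 - t \<le> gdist V E (p ! t) c'"
    using PTC[OF u(2) c pp] by blast
  obtain jst where Q: "jst \<in> set cyc" "shortest_path V E q j jst" "walk V E q" "hd q = j" "last q = jst"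
     "length q = Suc (gdist V E j jst)"
     "\<forall>t<length q. gdist V E j (q ! t) = t \<and> gdist V E (q ! t) jst = length q - 1 - t"
     "\<forall>t. Suc t < length q \<longrightarrow> q ! t \<notin> set cyc"
     "\<forall>t<length q. \<forall>c'\<in>set cyc. length q - 1 - t \<le> gdist V E (q ! t) c'"
    using PTC[OF u(2) c pq] by blast
  obtain k where k: "Suc k < length p" "e = {p ! k, p ! Suc k}" using ep unfolding walk_edges_nth by blast
  obtain k' where k': "Suc k' < length q" "e = {q ! k', q ! Suc k'}" using eq unfolding walk_edges_nth by blast
  have "(q ! k' = p ! k \<and> q ! Suc k' = p ! Suc k) \<or> (q ! k' = p ! Suc k \<and> q ! Suc k' = p ! k)"
    using k(2) k'(2) by (simp add: doubleton_eq_iff)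
  then have orient: "q ! k' = p ! k \<and> q ! Suc k' = p ! Suc k"
  proof
    assume r: "q ! k' = p ! Suc k \<and> q ! Suc k' = p ! k"
    have d1: "gdist V E (p ! Suc k) ist = length p - 1 - Suc k" using P(7) k(1) by blast
    have d2: "length p - 1 - k \<le> gdist V E (p ! k) jst" using P(9) k(1) Q(1) by simp
    have d3: "gdist V E (q ! Suc k') jst = length q - 1 - Suc k'" using Q(7) k'(1) by blast
    have d4: "length q - 1 - k' \<le> gdist V E (q ! k') ist" using Q(9) k'(1) P(1) by simp
    have "length p - 1 - k \<le> length q - 1 - Suc k'" using d2 d3 r by simp
    moreover have "length q - 1 - k' \<le> length p - 1 - Suc k" using d4 d1 r by simp
    ultimately show ?thesis using k(1) k'(1) by linarith
  qed simp
  define e0 where "e0 = {cv cyc 0, cv cyc (Suc 0)}"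
  have e0c: "e0 \<in> cycle_edges cyc" "e0 \<subseteq> set cyc" unfolding e0_def using e0_ce[OF c] by auto
  define T where "T = E - {e0}"
  have t: "tree V T" unfolding T_def using tree_minus[OF U c e0c(1)] .
  define \<phi> where "\<phi> x = gdist V T i x" for x
  have notE0: "{x, y} \<in> T" if "{x, y} \<in> E" "x \<notin> set cyc" for x y
  proof -
    have "{x, y} \<noteq> e0" using that(2) e0c(2) by auto
    then show ?thesis unfolding T_def using that(1) by simp
  qed
  have edi: "edist V E e i = k"
  proof -
    have "gdist V E i (p ! k) = k" "gdist V E i (p ! Suc k) = Suc k" using P(7) k(1) by auto
    then show ?thesis unfolding k(2) edist2 by simp
  qed
  have edj: "edist V E e j = k'"
  proof -
    have "gdist V E j (q ! k') = k'" "gdist V E j (q ! Suc k') = Suc k'" using Q(7) k'(1) by auto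
    then show ?thesis unfolding k'(2) edist2 by simp
  qed
  have pp0: "p ! 0 = i" using walk_hd_last[OF P(3)] P(4) by simp
  have qq0: "q ! 0 = j" using walk_hd_last[OF Q(3)] Q(4) by simp
  have par1: "even (k + \<phi> i + \<phi> (p ! k))"
  proof -
    have A1: "\<forall>s. 0 \<le> s \<longrightarrow> Suc s \<le> k \<longrightarrow> {p ! s, p ! Suc s} \<in> T"
      using walk_nthE[OF P(3)] P(8) k(1) notE0 by auto
    show ?thesis using tree_parity[OF t iV A1] pp0 unfolding \<phi>_def by simp
  qed
  have par2: "even (k' + \<phi> j + \<phi> (p ! k))"
  proof -
    have A1: "\<forall>s. 0 \<le> s \<longrightarrow> Suc s \<le> k' \<longrightarrow> {q ! s, q ! Suc s} \<in> T"
      using walk_nthE[OF Q(3)] Q(8) k'(1) notE0 by auto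
    show ?thesis using tree_parity[OF t iV A1] qq0 orient unfolding \<phi>_def by simp
  qed
  obtain R where R: "walk V E R" "hd R = i" "last R = j" "length R = Suc (gdist V E i j)"
    using conn_gdist[OF connected_conn[OF u(2) iV jV]] by blast
  have spR: "shortest_path V E R i j" unfolding shortest_path_def using R by blast
  have R0: "R ! 0 = i" "R ! (length R - 1) = j" using walk_hd_last[OF R(1)] R(2,3) by auto
  have RV: "\<forall>s\<le>b. R ! s \<in> V" if "b < length R" for b using walk_nthV[OF R(1)] that by auto
  have nR: "R ! t \<notin> set cyc" if t: "t < length R" for t
  proof
    assume Rt: "R ! t \<in> set cyc"
    have "\<exists>s<t. {R ! s, R ! Suc s} = e"
    proof (rule ccontr)
      assume "\<not> (\<exists>s<t. {R ! s, R ! Suc s} = e)"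
      then have A1: "\<forall>s. 0 \<le> s \<longrightarrow> Suc s \<le> t \<longrightarrow> {R ! s, R ! Suc s} \<in> E - {e}"
        using walk_nthE[OF R(1)] t by auto
      have "conn V (E - {e}) (R ! 0) (R ! t)" by (rule conn_idx[OF A1 RV[OF t]]) simp
      then have "conn V (E - {e}) (R ! t) i" using conn_sym R0 by metis
      then have "i \<in> comp_C V E cyc e" using comp_mem[OF nce Rt] by blast
      then show False using ni by blast
    qed
    then obtain s where s: "s < t" "{R ! s, R ! Suc s} = e" by blast
    have "\<exists>s'. t \<le> s' \<and> Suc s' < length R \<and> {R ! s', R ! Suc s'} = e"
    proof (rule ccontr)
      assume "\<not> (\<exists>s'. t \<le> s' \<and> Suc s' < length R \<and> {R ! s', R ! Suc s'} = e)"
      then have A1: "\<forall>s. t \<le> s \<longrightarrow> Suc s \<le> length R - 1 \<longrightarrow> {R ! s, R ! Suc s} \<in> E - {e}"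
        using walk_nthE[OF R(1)] by auto
      have "length R - 1 < length R" using t by simp
      have "conn V (E - {e}) (R ! t) (R ! (length R - 1))"
        by (rule conn_idx[OF A1 RV[OF \<open>length R - 1 < length R\<close>]]) (use t in simp)
      then have "conn V (E - {e}) (R ! t) j" using R0 by simp
      then have "j \<in> comp_C V E cyc e" using comp_mem[OF nce Rt] by blast
      then show False using nj by blast
    qed
    then obtain s' where s': "t \<le> s'" "Suc s' < length R" "{R ! s', R ! Suc s'} = e" by blast
    have "s = s'" using SP_edge_inj[OF u(2) spR, of s s'] s s' by simp
    then show False using s(1) s'(1) by simp
  qed
  have RT: "walk V T R" unfolding walk_def
  proof (intro conjI allI impI)
    show "R \<noteq> []" "set R \<subseteq> V" using R(1) unfolding walk_def by auto
  next
    fix s assume s: "Suc s < length R"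
    show "{R ! s, R ! Suc s} \<in> T" using notE0[OF walk_nthE[OF R(1) s] nR[of s]] s by simp
  qed
  have par3: "even (length R - 1 + \<phi> i + \<phi> j)" using walk_all_parity[OF t iV RT] R unfolding \<phi>_def by simp
  have "\<phi> i = 0" unfolding \<phi>_def using gdist_refl[OF iV] .
  then show ?thesis using par1 par2 par3 edi edj R(4) by simp presburger
qed


theorem mainTheorem11:
  fixes V :: "'a set" and E :: "'a set set" and cyc :: "'a list"
  assumes "unicyclic V E" and "is_cycle V E cyc" and "odd (length cyc)"
  shows
  "(\<forall>e\<in>E. \<forall>i\<in>V. \<forall>j\<in>V. \<forall>p q. i \<noteq> j \<longrightarrow>
      path_to_cycle V E cyc i p \<longrightarrow> path_to_cycle V E cyc j q \<longrightarrow>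
      ((e \<notin> cycle_edges cyc \<and> i \<notin> comp_C V E cyc e \<and> j \<notin> comp_C V E cyc e)
        \<longleftrightarrow> (e \<in> walk_edges p \<and> e \<in> walk_edges q)))
 \<and> (\<forall>e\<in>cycle_edges cyc. \<forall>i\<in>V. \<forall>j\<in>V. \<forall>p. shortest_path V E p i j \<longrightarrow>
      e \<in> walk_edges p \<longrightarrow>
      (even (edist V E e i + edist V E e j) \<longleftrightarrow> \<not> even (gdist V E i j)))
 \<and> (\<forall>e\<in>cycle_edges cyc. \<forall>i\<in>V. \<forall>j\<in>V. \<forall>p. shortest_path V E p i j \<longrightarrow>
      e \<notin> walk_edges p \<longrightarrow>
      (even (edist V E e i + edist V E e j) \<longleftrightarrow> even (gdist V E i j)))
 \<and> (\<forall>e\<in>E. \<forall>i\<in>V. \<forall>j\<in>V. \<forall>p q.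
      path_to_cycle V E cyc i p \<longrightarrow> path_to_cycle V E cyc j q \<longrightarrow>
      e \<in> walk_edges p \<longrightarrow> e \<in> walk_edges q \<longrightarrow>
      (even (edist V E e i + edist V E e j) \<longleftrightarrow> even (gdist V E i j)))"
proof -
  note u = unicyclic_basic[OF assms(1)]
  have P1: "\<forall>e\<in>E. \<forall>i\<in>V. \<forall>j\<in>V. \<forall>p q. i \<noteq> j \<longrightarrow>
      path_to_cycle V E cyc i p \<longrightarrow> path_to_cycle V E cyc j q \<longrightarrow>
      ((e \<notin> cycle_edges cyc \<and> i \<notin> comp_C V E cyc e \<and> j \<notin> comp_C V E cyc e)
        \<longleftrightarrow> (e \<in> walk_edges p \<and> e \<in> walk_edges q))"
  proof (intro ballI allI impI)
    fix e i j p q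
    assume pp: "path_to_cycle V E cyc i p" and pq: "path_to_cycle V E cyc j q"
    show "(e \<notin> cycle_edges cyc \<and> i \<notin> comp_C V E cyc e \<and> j \<notin> comp_C V E cyc e)
        \<longleftrightarrow> (e \<in> walk_edges p \<and> e \<in> walk_edges q)"
    proof
      assume h: "e \<notin> cycle_edges cyc \<and> i \<notin> comp_C V E cyc e \<and> j \<notin> comp_C V E cyc e"
      show "e \<in> walk_edges p \<and> e \<in> walk_edges q"
        using PC2[OF assms(1,2) pp] PC2[OF assms(1,2) pq] h by blast
    next
      assume h: "e \<in> walk_edges p \<and> e \<in> walk_edges q"
      show "e \<notin> cycle_edges cyc \<and> i \<notin> comp_C V E cyc e \<and> j \<notin> comp_C V E cyc e"
        using PC[OF assms(1,2) pp] PC[OF assms(1,2) pq] h by blast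
    qed
  qed
  have P2: "\<forall>e\<in>cycle_edges cyc. \<forall>i\<in>V. \<forall>j\<in>V. \<forall>p. shortest_path V E p i j \<longrightarrow>
      e \<in> walk_edges p \<longrightarrow>
      (even (edist V E e i + edist V E e j) \<longleftrightarrow> \<not> even (gdist V E i j))"
    using PA[OF u(2)] by blast
  have P3: "\<forall>e\<in>cycle_edges cyc. \<forall>i\<in>V. \<forall>j\<in>V. \<forall>p. shortest_path V E p i j \<longrightarrow>
      e \<notin> walk_edges p \<longrightarrow>
      (even (edist V E e i + edist V E e j) \<longleftrightarrow> even (gdist V E i j))"
    using PB[OF assms(1,2,3)] by blast
  have P4: "\<forall>e\<in>E. \<forall>i\<in>V. \<forall>j\<in>V. \<forall>p q.
      path_to_cycle V E cyc i p \<longrightarrow> path_to_cycle V E cyc j q \<longrightarrow>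
      e \<in> walk_edges p \<longrightarrow> e \<in> walk_edges q \<longrightarrow>
      (even (edist V E e i + edist V E e j) \<longleftrightarrow> even (gdist V E i j))"
    using PCc[OF assms(1,2)] by blast
  show ?thesis using P1 P2 P3 P4 by blast
qed

end
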